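(* For all integers $n\geq 0$, $i\geq 1$ and $k\geq 3$, \begin{align*} \bar a_{2^ki-2^{k-1}-2}(8n+5)&\equiv 0 \pmod{2^{k+1}},\\ \bar a_{2^ki-2^{k-1}-2}(8n+7)&\equiv 0 \pmod{2^{k+2}}. \end{align*}
   Context: For an integer $k\geq 1$ let $f_k:=\prod_{n\geq 1}(1-q^{kn})$. For an integer $c\geq1$, the generalized overcubic partition function $\bar a_c(n)$ is defined by the generating function $\sum_{n\geq 0}\bar a_c(n)q^n=\dfrac{f_4^{c-1}}{f_1^2f_2^{2c-3}}$. *)

theory Defs
  imports "HOL-Computational_Algebra.Formal_Power_Series"
begin

text \<open>f_k = prod_{m>=1} (1 - q^{km}) as a formal power series over the rationals.
  Its n-th coefficient is the n-th coefficient of the finite product over m = 1..n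
  (the factors with m > n do not affect coefficients of degree at most n when k >= 1).\<close>
definition eta_fps :: "nat \<Rightarrow> rat fps" where
  "eta_fps k = Abs_fps (\<lambda>n. fps_nth (\<Prod>m\<in>{1..n}. (1 - fps_X ^ (k * m))) n)"

text \<open>Generating function f_4^(c-1) / (f_1^2 f_2^(2c-3)); for c = 1 the exponent
  2c-3 = -1, i.e. the factor f_2 moves to the numerator.\<close>
definition overcubic_gf :: "nat \<Rightarrow> rat fps" where
  "overcubic_gf c = eta_fps 4 ^ (c - 1) * inverse (eta_fps 1 ^ 2) *
     (if c = 1 then eta_fps 2 else inverse (eta_fps 2 ^ (2 * c - 3)))"

definition abar :: "nat \<Rightarrow> nat \<Rightarrow> rat" where
  "abar c n = fps_nth (overcubic_gf c) n"

end

theory Submission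
  imports Defs
begin

unbundle fps_syntax




definition xc :: "nat \<Rightarrow> 'a::comm_ring_1 fps \<Rightarrow> 'a fps \<Rightarrow> bool" where
  "xc D A B \<longleftrightarrow> (\<forall>i<D. A $ i = B $ i)"

lemma xc_refl[simp]: "xc D A A" by (simp add: xc_def)
lemma xc_sym: "xc D A B \<Longrightarrow> xc D B A" by (simp add: xc_def)
lemma xc_trans: "xc D A B \<Longrightarrow> xc D B C \<Longrightarrow> xc D A C" by (simp add: xc_def)
lemma xc_mono: "xc D A B \<Longrightarrow> E \<le> D \<Longrightarrow> xc E A B" by (simp add: xc_def)
lemma xc_add: "xc D A B \<Longrightarrow> xc D C E \<Longrightarrow> xc D (A + C) (B + E)" by (simp add: xc_def)
lemma xc_diff: "xc D A B \<Longrightarrow> xc D C E \<Longrightarrow> xc D (A - C) (B - E)" by (simp add: xc_def)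
lemma xc_mult: assumes "xc D A B" "xc D C E" shows "xc D (A * C) (B * E)"
  unfolding xc_def
proof (intro allI impI)
  fix i assume i: "i < D"
  show "(A * C) $ i = (B * E) $ i" unfolding fps_mult_nth
    by (rule sum.cong) (use assms i in \<open>auto simp: xc_def\<close>)
qed
lemma xc_power: "xc D A B \<Longrightarrow> xc D (A ^ n) (B ^ n)"
  by (induction n) (auto intro: xc_mult)
lemma xc_sum: "finite I \<Longrightarrow> (\<And>i. i \<in> I \<Longrightarrow> xc D (f i) (g i)) \<Longrightarrow> xc D (sum f I) (sum g I)"
  by (induction I rule: finite_induct) (auto intro: xc_add)
lemma xc_prod: "finite I \<Longrightarrow> (\<And>i. i \<in> I \<Longrightarrow> xc D (f i) (g i)) \<Longrightarrow> xc D (prod f I) (prod g I)"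
  by (induction I rule: finite_induct) (auto intro: xc_mult)

lemma xc_X_power_zero: "D \<le> a \<Longrightarrow> xc D (fps_X ^ a * F) 0"
  by (simp add: xc_def fps_X_power_mult_nth)

lemma xc_zero_mult: assumes "xc D F 0" shows "xc D (G * F) 0"
  unfolding xc_def
proof (intro allI impI)
  fix i assume i: "i < D"
  show "(G * F) $ i = 0 $ i" unfolding fps_mult_nth
    by (simp, rule sum.neutral) (use assms i in \<open>auto simp: xc_def\<close>)
qed

lemma xc_iff_zero: "xc D A B \<longleftrightarrow> xc D (A - B) 0" by (simp add: xc_def)

lemma xc_inverse:
  fixes A B :: "'a::field fps"
  assumes "xc D A B" "A $ 0 \<noteq> 0" "D > 0"
  shows "xc D (inverse A) (inverse B)"
proof -
  have B0: "B $ 0 \<noteq> 0" using assms by (auto simp: xc_def)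
  have "inverse A - inverse B = (inverse A * inverse B) * (B - A)"
    using inverse_mult_eq_1[OF assms(2)] inverse_mult_eq_1[OF B0]
    by (simp add: algebra_simps)
  moreover have "xc D (B - A) 0" using assms by (simp add: xc_def)
  ultimately show ?thesis by (simp add: xc_iff_zero[of D "inverse A"] xc_zero_mult)
qed

lemma xc_cancel:
  fixes A B P :: "'a::field fps"
  assumes "xc D (P * A) (P * B)" "P $ 0 \<noteq> 0"
  shows "xc D A B"
proof -
  have "xc D (inverse P * (P * A)) (inverse P * (P * B))" by (rule xc_mult[OF xc_refl assms(1)])
  moreover have "inverse P * (P * C) = C" for C
    using inverse_mult_eq_1[OF assms(2)] by (simp add: mult.assoc[symmetric])
  ultimately show ?thesis by simp
qed

lemma xc_all_eq: "(\<And>D. xc D A B) \<Longrightarrow> A = B"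
  by (auto simp: xc_def fps_eq_iff)

lemma xc_one_minus: "D \<le> a \<Longrightarrow> xc D (1 - fps_X ^ a) 1"
  using xc_X_power_zero[of D a 1] by (simp add: xc_def)

lemma eta_trunc:
  assumes k: "k \<ge> 1" and "D \<le> Suc a"
  shows "xc D (\<Prod>m\<in>{1..a}. (1 - fps_X ^ (k*m) :: rat fps)) (eta_fps k)"
  unfolding xc_def
proof (intro allI impI)
  fix e assume e: "e < D"
  hence ea: "e \<le> a" using assms by auto
  have split: "{1..a} = {1..e} \<union> {Suc e..a}" using ea by auto
  have "(\<Prod>m\<in>{1..a}. (1 - fps_X ^ (k*m) :: rat fps)) =
        (\<Prod>m\<in>{1..e}. (1 - fps_X ^ (k*m))) * (\<Prod>m\<in>{Suc e..a}. (1 - fps_X ^ (k*m)))"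
    unfolding split by (rule prod.union_disjoint) auto
  moreover have "xc (Suc e) (\<Prod>m\<in>{Suc e..a}. (1 - fps_X ^ (k*m) :: rat fps)) (\<Prod>m\<in>{Suc e..a}. 1)"
  proof (rule xc_prod)
    fix m assume "m \<in> {Suc e..a}"
    hence "Suc e \<le> m" by simp
    moreover have "m \<le> k * m" using k by simp
    ultimately have "Suc e \<le> k * m" by linarith
    thus "xc (Suc e) (1 - fps_X ^ (k*m)) 1" by (rule xc_one_minus)
  qed auto
  ultimately have "xc (Suc e) (\<Prod>m\<in>{1..a}. (1 - fps_X ^ (k*m) :: rat fps)) (\<Prod>m\<in>{1..e}. (1 - fps_X ^ (k*m)))"
    using xc_mult[OF xc_refl] by fastforce
  thus "(\<Prod>m\<in>{1..a}. (1 - fps_X ^ (k*m) :: rat fps)) $ e = eta_fps k $ e"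
    by (simp add: xc_def eta_fps_def)
qed





fun qbin :: "'a::comm_ring_1 \<Rightarrow> nat \<Rightarrow> nat \<Rightarrow> 'a" where
  "qbin p 0 j = (if j = 0 then 1 else 0)"
| "qbin p (Suc M) 0 = 1"
| "qbin p (Suc M) (Suc j) = qbin p M (Suc j) + p ^ (M - j) * qbin p M j"

lemma qbin_gt: "M < j \<Longrightarrow> qbin p M j = 0"
proof (induction M arbitrary: j)
  case 0 thus ?case by simp
next
  case (Suc M)
  then obtain j' where "j = Suc j'" by (cases j) auto
  with Suc show ?case by simp
qed

definition tri :: "nat \<Rightarrow> nat" where "tri j = (\<Sum>i<j. i)"
lemma tri_Suc: "tri (Suc j) = tri j + j" by (simp add: tri_def)
lemma tri_0[simp]: "tri 0 = 0" by (simp add: tri_def)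
lemma tri_double: "2 * tri j = j * (j - 1)"
proof (induction j)
  case (Suc j) thus ?case by (cases j) (auto simp: tri_Suc algebra_simps)
qed simp

lemma qbin_diag[simp]: "qbin p M M = 1"
  by (induction M) (auto simp: qbin_gt)

lemma cauchy:
  fixes p y z :: "'a::comm_ring_1"
  shows "(\<Prod>i<M. (y + z * p ^ i)) = (\<Sum>j\<le>M. p ^ tri j * qbin p M j * z ^ j * y ^ (M - j))"
proof (induction M)
  case 0 thus ?case by simp
next
  case (Suc M)
  have "(\<Prod>i<Suc M. (y + z * p ^ i)) = (\<Sum>j\<le>M. p ^ tri j * qbin p M j * z ^ j * y ^ (M - j)) * (y + z * p ^ M)"
    using Suc by simp
  also have "\<dots> = (\<Sum>j\<le>M. p ^ tri j * qbin p M j * z ^ j * y ^ (Suc M - j))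
      + (\<Sum>j\<le>M. p ^ (tri j + M) * qbin p M j * z ^ Suc j * y ^ (M - j))"
  proof -
    have "(\<Sum>j\<le>M. p ^ tri j * qbin p M j * z ^ j * y ^ (M - j)) * (y + z * p ^ M) =
      (\<Sum>j\<le>M. (p ^ tri j * qbin p M j * z ^ j * y ^ (M - j)) * y) +
      (\<Sum>j\<le>M. (p ^ tri j * qbin p M j * z ^ j * y ^ (M - j)) * (z * p ^ M))"
      by (simp add: distrib_left sum_distrib_right)
    also have "\<dots> = (\<Sum>j\<le>M. p ^ tri j * qbin p M j * z ^ j * y ^ (Suc M - j))
      + (\<Sum>j\<le>M. p ^ (tri j + M) * qbin p M j * z ^ Suc j * y ^ (M - j))" by (intro arg_cong2[where f="(+)"] sum.cong) (auto simp: power_add Suc_diff_le algebra_simps)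
    finally show ?thesis .
  qed
  also have "(\<Sum>j\<le>M. p ^ tri j * qbin p M j * z ^ j * y ^ (Suc M - j)) =
     y ^ Suc M + (\<Sum>j\<le>M. p ^ tri (Suc j) * qbin p M (Suc j) * z ^ Suc j * y ^ (M - j))"
  proof -
    have "(\<Sum>j\<le>Suc M. p ^ tri j * qbin p M j * z ^ j * y ^ (Suc M - j)) =
       (\<Sum>j\<le>M. p ^ tri j * qbin p M j * z ^ j * y ^ (Suc M - j))"
      by (simp add: qbin_gt)
    moreover have "(\<Sum>j\<le>Suc M. p ^ tri j * qbin p M j * z ^ j * y ^ (Suc M - j)) =
       y ^ Suc M + (\<Sum>j\<le>M. p ^ tri (Suc j) * qbin p M (Suc j) * z ^ Suc j * y ^ (M - j))"
      by (subst sum.atMost_Suc_shift) (cases M; simp)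
    ultimately show ?thesis by simp
  qed
  also have "(\<Sum>j\<le>M. p ^ (tri j + M) * qbin p M j * z ^ Suc j * y ^ (M - j)) =
      (\<Sum>j\<le>M. p ^ tri (Suc j) * (p ^ (M - j) * qbin p M j) * z ^ Suc j * y ^ (M - j))"
  proof (rule sum.cong)
    fix j assume "j \<in> {..M}"
    hence "tri j + M = tri (Suc j) + (M - j)" by (simp add: tri_Suc)
    thus "p ^ (tri j + M) * qbin p M j * z ^ Suc j * y ^ (M - j) =
      p ^ tri (Suc j) * (p ^ (M - j) * qbin p M j) * z ^ Suc j * y ^ (M - j)"
      by (simp add: power_add)
  qed simp
  also have "y ^ Suc M + (\<Sum>j\<le>M. p ^ tri (Suc j) * qbin p M (Suc j) * z ^ Suc j * y ^ (M - j)) + \<dots>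
     = (\<Sum>j\<le>Suc M. p ^ tri j * qbin p (Suc M) j * z ^ j * y ^ (Suc M - j))"
    by (subst sum.atMost_Suc_shift) (simp add: sum.distrib algebra_simps)
  finally show ?case .
qed

definition pp :: "'a::comm_ring_1 \<Rightarrow> nat \<Rightarrow> 'a" where
  "pp p a = (\<Prod>i\<in>{1..a}. (1 - p ^ i))"

lemma pp_0[simp]: "pp p 0 = 1" by (simp add: pp_def)
lemma pp_Suc: "pp p (Suc a) = pp p a * (1 - p ^ Suc a)"
  by (simp add: pp_def prod.nat_ivl_Suc' mult.commute)

lemma qbin_pp: "j \<le> M \<Longrightarrow> qbin p M j * pp p j * pp p (M - j) = pp p M"
proof (induction M arbitrary: j)
  case 0 thus ?case by simp
next
  case (Suc M)
  show ?case
  proof (cases j)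
    case 0 thus ?thesis by simp
  next
    case (Suc j')
    show ?thesis
    proof (cases "j' = M")
      case True
      have "qbin p M (Suc M) = 0" by (simp add: qbin_gt)
      with True Suc Suc.IH[of M] show ?thesis by (simp add: pp_Suc algebra_simps)
    next
      case False
      hence jm: "Suc j' \<le> M" using Suc Suc.prems by simp
      have A: "qbin p M (Suc j') * pp p (Suc j') * pp p (M - Suc j') = pp p M" using Suc.IH[OF jm] .
      have B: "qbin p M j' * pp p j' * pp p (M - j') = pp p M" using Suc.IH[of j'] jm by simp
      have e1: "M - j' = Suc (M - Suc j')" using jm by simp
      have "qbin p (Suc M) j * pp p j * pp p (Suc M - j) =
         (qbin p M (Suc j') + p ^ (M - j') * qbin p M j') * pp p (Suc j') * pp p (M - j')"
        using Suc by simp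
      also have "\<dots> = (qbin p M (Suc j') * pp p (Suc j') * pp p (M - Suc j')) * (1 - p ^ (M - j'))
          + p ^ (M - j') * (qbin p M j' * pp p j' * pp p (M - j')) * (1 - p ^ Suc j')"
        unfolding e1 pp_Suc by (simp add: algebra_simps)
      also have "\<dots> = pp p M * (1 - p ^ Suc M)"
        unfolding A B using jm by (simp add: algebra_simps power_add[symmetric])
      finally show ?thesis by (simp add: pp_Suc)
    qed
  qed
qed





definition dd :: "nat \<Rightarrow> nat \<Rightarrow> nat" where "dd n j = (if j \<le> n then n - j else j - n)"

definition Oo :: "nat \<Rightarrow> nat \<Rightarrow> rat fps" where
  "Oo k n = (\<Prod>i<n. (1 - fps_X ^ (k * (2*i+1))))"

lemma exp_eq:
  assumes "j \<le> 2*n"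
  shows "2 * tri j + (2*n-1)*(2*n-j) = (2 * tri n + n*(2*n-1)) + dd n j ^ 2"
proof -
  have "int (2 * tri j + (2*n-1)*(2*n-j)) = int (2 * tri n + n*(2*n-1) + dd n j ^ 2)"
  proof (cases "n = 0")
    case True thus ?thesis using assms by (simp add: dd_def)
  next
    case False
    have h1: "int (2*tri j) = int j * (int j - 1)"
      unfolding tri_double by (cases j) (auto simp: algebra_simps)
    have h2: "int (2*tri n) = int n * (int n - 1)"
      unfolding tri_double by (cases n) (auto simp: algebra_simps)
    have h3: "int ((2*n-1)*(2*n-j)) = (2*int n - 1) * (2 * int n - int j)"
      using False assms by (simp add: of_nat_diff)
    have h4: "int (n*(2*n-1)) = int n * (2 * int n - 1)"
      using False by (simp add: of_nat_diff)
    have h5: "int (dd n j ^ 2) = (int j - int n)^2"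
      by (auto simp: dd_def of_nat_diff power2_eq_square algebra_simps)
    show ?thesis
      by (simp only: of_nat_add h1 h2 h3 h4 h5) (simp add: algebra_simps power2_eq_square)
  qed
  thus ?thesis by linarith
qed

lemma lhs_split:
  "(\<Prod>i<2*n. (fps_X ^ (k*(2*n-1)) + (-1) * (fps_X ^ (2*k)) ^ i :: rat fps)) =
     (-1) ^ n * fps_X ^ (k * (2 * tri n + n*(2*n-1))) * Oo k n ^ 2"
proof -
  have U: "{..<2*n} = {..<n} \<union> {n..<2*n}" by auto
  have "(\<Prod>i<2*n. (fps_X ^ (k*(2*n-1)) + (-1) * (fps_X ^ (2*k)) ^ i :: rat fps)) =
    (\<Prod>i<n. (fps_X ^ (k*(2*n-1)) + (-1) * (fps_X ^ (2*k)) ^ i :: rat fps)) *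
    (\<Prod>i\<in>{n..<2*n}. (fps_X ^ (k*(2*n-1)) + (-1) * (fps_X ^ (2*k)) ^ i :: rat fps))"
    unfolding U by (rule prod.union_disjoint) auto
  also have "(\<Prod>i<n. (fps_X ^ (k*(2*n-1)) + (-1) * (fps_X ^ (2*k)) ^ i :: rat fps)) =
     (\<Prod>i<n. (-1) * fps_X ^ (2*k*i) * (1 - fps_X ^ (k * (2*(n - Suc i)+1))))"
  proof (rule prod.cong)
    fix i assume "i \<in> {..<n}"
    hence e: "2*n-1 = 2*i + (2*(n - Suc i)+1)" by simp
    have "k*(2*n-1) = 2*k*i + k * (2*(n - Suc i)+1)" by (subst e) (simp add: algebra_simps)
    have g: "(fps_X^(a+b) + (-1)*fps_X^a :: rat fps) = (-1)*fps_X^a*(1 - fps_X^b)" for a b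
      by (simp add: power_add algebra_simps)
    have "(fps_X ^ (2*k)) ^ i = (fps_X ^ (2*k*i) :: rat fps)" by (simp add: power_mult)
    thus "(fps_X ^ (k*(2*n-1)) + (-1) * (fps_X ^ (2*k)) ^ i :: rat fps) =
      (-1) * fps_X ^ (2*k*i) * (1 - fps_X ^ (k * (2*(n - Suc i)+1)))"
      using g[of "2*k*i" "k * (2*(n - Suc i)+1)"] \<open>k*(2*n-1) = _\<close> by simp
  qed simp
  also have "\<dots> = (-1) ^ n * fps_X ^ (k * (2 * tri n)) * Oo k n"
  proof -
    have "(\<Prod>i<n. (1 - fps_X ^ (k * (2*(n - Suc i)+1)) :: rat fps)) = Oo k n"
      unfolding Oo_def by (rule prod.nat_diff_reindex)
    moreover have "(\<Prod>i<n. (fps_X ^ (2*k*i) :: rat fps)) = fps_X ^ (k * (2 * tri n))"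
      by (simp add: power_sum tri_def sum_distrib_left algebra_simps)
    moreover have "(\<Prod>i<n. (-1) * fps_X ^ (2*k*i) * (1 - fps_X ^ (k * (2*(n - Suc i)+1))) :: rat fps)
      = (\<Prod>i<n. (-1::rat fps)) * (\<Prod>i<n. fps_X ^ (2*k*i)) * (\<Prod>i<n. (1 - fps_X ^ (k * (2*(n - Suc i)+1))))"
      by (simp only: prod.distrib)
    ultimately show ?thesis by simp
  qed
  also have "(\<Prod>i\<in>{n..<2*n}. (fps_X ^ (k*(2*n-1)) + (-1) * (fps_X ^ (2*k)) ^ i :: rat fps)) =
     (\<Prod>t<n. fps_X ^ (k*(2*n-1)) * (1 - fps_X ^ (k*(2*t+1))))"
  proof -
    have "(\<Prod>i\<in>{n..<2*n}. (fps_X ^ (k*(2*n-1)) + (-1) * (fps_X ^ (2*k)) ^ i :: rat fps)) =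
       (\<Prod>t\<in>{0..<n}. (fps_X ^ (k*(2*n-1)) + (-1) * (fps_X ^ (2*k)) ^ (t + n) :: rat fps))"
      using prod.shift_bounds_nat_ivl[of _ 0 n n] by (simp add: mult_2)
    also have "\<dots> = (\<Prod>t<n. fps_X ^ (k*(2*n-1)) * (1 - fps_X ^ (k*(2*t+1))))"
    proof (rule prod.cong)
      fix t assume "t \<in> {..<n}"
      hence "2*(t+n) = (2*n-1) + (2*t+1)" by simp
      hence "k*(2*(t+n)) = k*(2*n-1) + k*(2*t+1)" by (metis add_mult_distrib2)
      hence "2*k*(t+n) = k*(2*n-1) + k*(2*t+1)" by (simp add: mult.assoc mult.left_commute)
      moreover have g: "(fps_X^a + (-1)*fps_X^(a+b) :: rat fps) = fps_X^a*(1 - fps_X^b)" for a b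
        by (simp add: power_add algebra_simps)
      moreover have "(fps_X ^ (2*k)) ^ (t+n) = (fps_X ^ (2*k*(t+n)) :: rat fps)" by (simp add: power_mult)
      ultimately show "(fps_X ^ (k*(2*n-1)) + (-1) * (fps_X ^ (2*k)) ^ (t + n) :: rat fps) =
          fps_X ^ (k*(2*n-1)) * (1 - fps_X ^ (k*(2*t+1)))"
        by (simp only:)
    qed auto
    finally show ?thesis .
  qed
  also have "\<dots> = fps_X ^ (k * (n*(2*n-1))) * Oo k n"
  proof -
    have "(\<Prod>t<n. fps_X ^ (k*(2*n-1)) * (1 - fps_X ^ (k*(2*t+1))) :: rat fps) =
      (fps_X ^ (k*(2*n-1))) ^ n * Oo k n"
      by (simp only: prod.distrib prod_constant card_lessThan Oo_def)
    also have "(fps_X ^ (k*(2*n-1)) :: rat fps) ^ n = fps_X ^ (k * (n*(2*n-1)))"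
      by (simp only: power_mult[symmetric] mult_ac)
    finally show ?thesis .
  qed
  finally have "(\<Prod>i<2*n. (fps_X ^ (k*(2*n-1)) + (-1) * (fps_X ^ (2*k)) ^ i :: rat fps)) =
     (-1) ^ n * fps_X ^ (k * (2 * tri n)) * Oo k n * (fps_X ^ (k * (n*(2*n-1))) * Oo k n)" .
  thus ?thesis by (simp only: add_mult_distrib2 power_add power2_eq_square mult_ac)
qed

lemma gauss_fin:
  "Oo k n ^ 2 = (\<Sum>j\<le>2*n. (-1) ^ (j+n) * fps_X ^ (k * dd n j ^ 2) * qbin (fps_X ^ (2*k)) (2*n) j :: rat fps)"
proof -
  define E where "E = k * (2 * tri n + n*(2*n-1))"
  have "(-1) ^ n * fps_X ^ E * Oo k n ^ 2 =
     (\<Sum>j\<le>2*n. (fps_X ^ (2*k)) ^ tri j * qbin (fps_X ^ (2*k)) (2*n) j * (-1) ^ j * (fps_X ^ (k*(2*n-1))) ^ (2*n - j) :: rat fps)"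
    using cauchy[of "fps_X ^ (k*(2*n-1)) :: rat fps" "-1" "fps_X ^ (2*k)" "2*n"] lhs_split[of k n]
    unfolding E_def by simp
  also have "\<dots> = (\<Sum>j\<le>2*n. fps_X ^ E * ((-1) ^ j * fps_X ^ (k * dd n j ^ 2) * qbin (fps_X ^ (2*k)) (2*n) j))"
  proof (rule sum.cong)
    fix j assume "j \<in> {..2*n}"
    hence "k * (2 * tri j + (2*n-1)*(2*n-j)) = E + k * dd n j ^ 2"
      using exp_eq[of j n] unfolding E_def by (simp add: algebra_simps)
    hence "(fps_X ^ (2*k)) ^ tri j * (fps_X ^ (k*(2*n-1))) ^ (2*n - j) = (fps_X ^ E * fps_X ^ (k * dd n j ^ 2) :: rat fps)"
      by (simp only: power_mult[symmetric] power_add[symmetric] add_mult_distrib2 mult_ac)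
    thus "(fps_X ^ (2*k)) ^ tri j * qbin (fps_X ^ (2*k)) (2*n) j * (-1) ^ j * (fps_X ^ (k*(2*n-1))) ^ (2*n - j) =
       (fps_X ^ E * ((-1) ^ j * fps_X ^ (k * dd n j ^ 2) * qbin (fps_X ^ (2*k)) (2*n) j) :: rat fps)"
      by (simp add: mult_ac)
  qed simp
  also have "\<dots> = fps_X ^ E * (\<Sum>j\<le>2*n. (-1) ^ j * fps_X ^ (k * dd n j ^ 2) * qbin (fps_X ^ (2*k)) (2*n) j)"
    by (simp add: sum_distrib_left)
  finally have "fps_X ^ E * ((-1) ^ n * Oo k n ^ 2) = fps_X ^ E * (\<Sum>j\<le>2*n. (-1) ^ j * fps_X ^ (k * dd n j ^ 2) * qbin (fps_X ^ (2*k)) (2*n) j)"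
    by (simp add: mult_ac)
  hence "(-1) ^ n * Oo k n ^ 2 = (\<Sum>j\<le>2*n. (-1) ^ j * fps_X ^ (k * dd n j ^ 2) * qbin (fps_X ^ (2*k)) (2*n) j :: rat fps)"
    by simp
  hence "(-1) ^ n * ((-1) ^ n * Oo k n ^ 2) = (-1) ^ n * (\<Sum>j\<le>2*n. (-1) ^ j * fps_X ^ (k * dd n j ^ 2) * qbin (fps_X ^ (2*k)) (2*n) j :: rat fps)"
    by simp
  thus ?thesis by (simp add: sum_distrib_left power_add mult_ac power_mult_distrib[symmetric])
qed





definition theta :: "rat \<Rightarrow> nat \<Rightarrow> rat fps" where
  "theta s k = Abs_fps (\<lambda>e. \<Sum>t\<in>{-int e..int e}. if k * nat \<bar>t\<bar> ^ 2 = e then s ^ nat \<bar>t\<bar> else 0)"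

definition Trj :: "nat \<Rightarrow> nat \<Rightarrow> rat fps" where
  "Trj k n = (\<Sum>j\<le>2*n. (-1) ^ (j+n) * fps_X ^ (k * dd n j ^ 2))"

lemma sum_reindex_sym:
  "(\<Sum>j\<le>2*n. f j) = (\<Sum>t\<in>{-int n..int n}. f (nat (t + int n)))"
  by (rule sum.reindex_bij_witness[where j="\<lambda>j. int j - int n" and i="\<lambda>t. nat (t + int n)"]) auto

lemma neg1_pow_eq: "even (a + b) \<Longrightarrow> (-1::'a::comm_ring_1) ^ a = (-1) ^ b"
  by (auto simp: minus_one_power_iff)

lemma neg1_fps: "(-1::rat fps) ^ a = fps_const ((-1) ^ a)"
  by (induction a) (auto simp flip: fps_const_mult fps_const_neg)

lemma neg1_fps_nth[simp]: "((-1::rat fps) ^ a * F) $ e = (-1) ^ a * F $ e"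
  by (simp add: neg1_fps)

lemma theta_nth: "theta s k $ e = (\<Sum>t\<in>{-int e..int e}. if k * nat \<bar>t\<bar> ^ 2 = e then s ^ nat \<bar>t\<bar> else 0)"
  by (simp add: theta_def)

lemma trj_theta:
  assumes k: "k \<ge> 1"
  shows "xc (Suc n) (Trj k n) (theta (-1) k)"
  unfolding xc_def
proof (intro allI impI)
  fix e assume "e < Suc n"
  hence en: "e \<le> n" by simp
  have "Trj k n $ e = (\<Sum>j\<le>2*n. if k * dd n j ^ 2 = e then (-1) ^ (j+n) else 0)"
    unfolding Trj_def fps_sum_nth by (intro sum.cong) auto
  also have "\<dots> = (\<Sum>t\<in>{-int n..int n}. if k * dd n (nat (t + int n)) ^ 2 = e then (-1) ^ (nat (t + int n) + n) else 0)"
    by (rule sum_reindex_sym)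
  also have "\<dots> = (\<Sum>t\<in>{-int n..int n}. if k * nat \<bar>t\<bar> ^ 2 = e then (-1) ^ nat \<bar>t\<bar> else 0)"
  proof (rule sum.cong)
    fix t assume t: "t \<in> {-int n..int n}"
    have "dd n (nat (t + int n)) = nat \<bar>t\<bar>" using t by (auto simp: dd_def)
    moreover have "nat (t + int n) + n + nat \<bar>t\<bar> = 2 * (n + nat (max t 0))" using t
      by (cases "t \<ge> 0") auto
    hence "even (nat (t + int n) + n + nat \<bar>t\<bar>)" by (metis dvd_triv_left)
    hence "(-1::rat) ^ (nat (t + int n) + n) = (-1) ^ nat \<bar>t\<bar>" by (rule neg1_pow_eq)
    ultimately show "(if k * dd n (nat (t + int n)) ^ 2 = e then (-1) ^ (nat (t + int n) + n) else 0) =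
       (if k * nat \<bar>t\<bar> ^ 2 = e then (-1::rat) ^ nat \<bar>t\<bar> else 0)"
      by simp
  qed simp
  also have "\<dots> = (\<Sum>t\<in>{-int e..int e}. if k * nat \<bar>t\<bar> ^ 2 = e then (-1) ^ nat \<bar>t\<bar> else 0)"
  proof (rule sum.mono_neutral_right)
    show "\<forall>t\<in>{-int n..int n} - {-int e..int e}. (if k * nat \<bar>t\<bar> ^ 2 = e then (-1::rat) ^ nat \<bar>t\<bar> else 0) = 0"
    proof
      fix t assume t: "t \<in> {-int n..int n} - {-int e..int e}"
      hence "e < nat \<bar>t\<bar>" by auto
      also have "nat \<bar>t\<bar> \<le> nat \<bar>t\<bar> ^ 2" by (cases "nat \<bar>t\<bar>") (auto simp: power2_eq_square)
      also have "\<dots> \<le> k * nat \<bar>t\<bar> ^ 2" using k by simp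
      finally show "(if k * nat \<bar>t\<bar> ^ 2 = e then (-1::rat) ^ nat \<bar>t\<bar> else 0) = 0" by simp
    qed
  qed (use en in auto)
  finally show "Trj k n $ e = theta (-1) k $ e" by (simp add: theta_nth)
qed





lemma pp_eta:
  assumes "k \<ge> 1" "D \<le> Suc a"
  shows "xc D (pp (fps_X ^ k) a) (eta_fps k)"
proof -
  have "pp (fps_X ^ k) a = (\<Prod>m\<in>{1..a}. (1 - fps_X ^ (k*m) :: rat fps))"
    unfolding pp_def by (simp add: power_mult)
  thus ?thesis using eta_trunc[OF assms] by simp
qed

lemma pp_split: "pp (fps_X ^ k :: rat fps) (2*n) = pp (fps_X ^ (2*k)) n * Oo k n"
proof (induction n)
  case 0 thus ?case by (simp add: Oo_def)
next
  case (Suc n)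
  have e: "2 * Suc n = Suc (Suc (2*n))" by simp
  have "pp (fps_X ^ k :: rat fps) (2 * Suc n) = pp (fps_X ^ k) (2*n) * (1 - fps_X ^ (k*(2*n+1))) * (1 - fps_X ^ (2*k*Suc n))"
  proof -
    have a: "(fps_X^k :: rat fps)^Suc(2*n) = fps_X^(k*(2*n+1))"
      by (simp only: power_mult[symmetric]) simp
    have b: "(fps_X^k :: rat fps)^Suc(Suc(2*n)) = fps_X^(2*k*Suc n)"
      by (simp only: power_mult[symmetric]) (simp add: mult_ac)
    show ?thesis unfolding e pp_Suc a b by simp
  qed
  also have "\<dots> = pp (fps_X ^ (2*k)) (Suc n) * Oo k (Suc n)"
  proof -
    have b: "(fps_X^(2*k) :: rat fps)^Suc n = fps_X^(2*k*Suc n)"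
      by (simp only: power_mult[symmetric])
    show ?thesis unfolding Suc pp_Suc Oo_def b by (simp add: mult_ac)
  qed
  finally show ?case .
qed

lemma eta0[simp]: "eta_fps k $ 0 = 1"
  by (simp add: eta_fps_def)

theorem gauss:
  assumes k: "k \<ge> 1"
  shows "eta_fps k ^ 2 = eta_fps (2*k) * theta (-1) k"
proof (rule xc_all_eq)
  fix D
  define n :: nat where "n = 2 * D"
  define F where "F = eta_fps (2*k)"
  define P where "P = pp (fps_X ^ (2*k) :: rat fps) n"
  define Q where "Q = (\<lambda>j. qbin (fps_X ^ (2*k) :: rat fps) (2*n) j)"
  have k2: "2*k \<ge> 1" using k by simp
  have F0: "F $ 0 \<noteq> 0" by (simp add: F_def)
  have ppF: "xc D (pp (fps_X ^ (2*k)) a) F" if "D \<le> a" for a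
    unfolding F_def by (rule pp_eta[OF k2]) (use that in simp)
  have PF: "xc D P F" unfolding P_def n_def by (rule ppF) simp
  have "xc D (eta_fps k ^ 2) (pp (fps_X ^ k) (2*n) ^ 2)"
    by (intro xc_power xc_sym[OF pp_eta[OF k]]) (simp add: n_def)
  also have "pp (fps_X ^ k) (2*n) ^ 2 = P * (P * Oo k n ^ 2)"
    unfolding pp_split P_def by (simp add: power2_eq_square mult_ac)
  also have "P * Oo k n ^ 2 = (\<Sum>j\<le>2*n. P * ((-1) ^ (j+n) * fps_X ^ (k * dd n j ^ 2) * Q j))"
    unfolding gauss_fin Q_def by (simp add: sum_distrib_left)
  finally have 1: "xc D (eta_fps k ^ 2) (P * (\<Sum>j\<le>2*n. P * ((-1) ^ (j+n) * fps_X ^ (k * dd n j ^ 2) * Q j)))" .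
  have 2: "xc D (\<Sum>j\<le>2*n. P * ((-1) ^ (j+n) * fps_X ^ (k * dd n j ^ 2) * Q j)) (Trj k n)"
    unfolding Trj_def
  proof (rule xc_sum)
    fix j assume j: "j \<in> {..2*n}"
    show "xc D (P * ((-1) ^ (j+n) * fps_X ^ (k * dd n j ^ 2) * Q j)) ((-1) ^ (j+n) * fps_X ^ (k * dd n j ^ 2))"
    proof (cases "D \<le> k * dd n j ^ 2")
      case True
      have "xc D (fps_X ^ (k * dd n j ^ 2) * ((-1) ^ (j+n) * P * Q j)) 0"
        by (rule xc_X_power_zero[OF True])
      moreover have "xc D (fps_X ^ (k * dd n j ^ 2) * (-1) ^ (j+n) :: rat fps) 0"
        by (rule xc_X_power_zero[OF True])
      moreover have "P * ((-1) ^ (j+n) * fps_X ^ (k * dd n j ^ 2) * Q j) = fps_X ^ (k * dd n j ^ 2) * ((-1) ^ (j+n) * P * Q j)"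
        by (simp add: mult_ac)
      moreover have "(-1) ^ (j+n) * fps_X ^ (k * dd n j ^ 2) = (fps_X ^ (k * dd n j ^ 2) * (-1) ^ (j+n) :: rat fps)"
        by (rule mult.commute)
      ultimately show ?thesis by (metis xc_sym xc_trans)
    next
      case False
      have "dd n j \<le> dd n j ^ 2" by (cases "dd n j") (auto simp: power2_eq_square)
      also have "\<dots> \<le> k * dd n j ^ 2" using k by simp
      finally have "dd n j < D" using False by simp
      hence jD: "D \<le> j" "D \<le> 2*n - j" "j \<le> 2*n" using j unfolding n_def dd_def by (auto split: if_splits)
      have "Q j * pp (fps_X ^ (2*k)) j * pp (fps_X ^ (2*k)) (2*n - j) = pp (fps_X ^ (2*k)) (2*n)"
        unfolding Q_def by (rule qbin_pp) (use jD in simp)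
      hence "xc D (F * (Q j * F)) (F * 1)"
        using xc_mult[OF xc_mult[OF xc_refl[of D "Q j"] ppF[OF jD(1)]] ppF[OF jD(2)]] ppF[of "2*n"] jD
        by (simp add: xc_def mult_ac)
      hence "xc D (Q j * F) 1" by (rule xc_cancel) (rule F0)
      hence "xc D (P * Q j) 1" using xc_mult[OF PF xc_refl[of D "Q j"]] by (simp add: xc_def mult_ac)
      hence "xc D ((-1) ^ (j+n) * fps_X ^ (k * dd n j ^ 2) * (P * Q j)) ((-1) ^ (j+n) * fps_X ^ (k * dd n j ^ 2) * 1)"
        by (intro xc_mult xc_refl)
      thus ?thesis by (simp add: mult_ac)
    qed
  qed simp
  have 3: "xc D (Trj k n) (theta (-1) k)"
    by (rule xc_mono[OF trj_theta[OF k]]) (simp add: n_def)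
  have "xc D (P * (\<Sum>j\<le>2*n. P * ((-1) ^ (j+n) * fps_X ^ (k * dd n j ^ 2) * Q j))) (F * theta (-1) k)"
    by (rule xc_mult[OF PF xc_trans[OF 2 3]])
  with 1 show "xc D (eta_fps k ^ 2) (eta_fps (2*k) * theta (-1) k)"
    unfolding F_def by (rule xc_trans)
qed





definition Tr :: "rat \<Rightarrow> nat \<Rightarrow> nat \<Rightarrow> rat fps" where
  "Tr s k n = (\<Sum>t\<in>{-int n..int n}. fps_const (s ^ nat \<bar>t\<bar>) * fps_X ^ (k * nat \<bar>t\<bar> ^ 2))"

lemma mono_sum_nth:
  "(\<Sum>x\<in>S. fps_const (c x) * fps_X ^ (g x)) $ e = (\<Sum>x\<in>S. if g x = e then c x else (0::'a::comm_ring_1))"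
  unfolding fps_sum_nth by (intro sum.cong) auto

lemma nat_le_sq: "(m::nat) \<le> m ^ 2" by (cases m) (auto simp: power2_eq_square)
lemma int_abs_le_sq: "\<bar>x::int\<bar> \<le> x ^ 2"
proof (cases "x = 0")
  case False
  hence "\<bar>x\<bar> * 1 \<le> \<bar>x\<bar> * \<bar>x\<bar>" by (intro mult_left_mono) auto
  thus ?thesis by (simp add: power2_eq_square)
qed simp

lemma tr_theta:
  assumes k: "k \<ge> 1"
  shows "xc (Suc n) (Tr s k n) (theta s k)"
  unfolding xc_def
proof (intro allI impI)
  fix e assume "e < Suc n"
  hence en: "e \<le> n" by simp
  have "Tr s k n $ e = (\<Sum>t\<in>{-int n..int n}. if k * nat \<bar>t\<bar> ^ 2 = e then s ^ nat \<bar>t\<bar> else 0)"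
    unfolding Tr_def mono_sum_nth ..
  also have "\<dots> = (\<Sum>t\<in>{-int e..int e}. if k * nat \<bar>t\<bar> ^ 2 = e then s ^ nat \<bar>t\<bar> else 0)"
  proof (rule sum.mono_neutral_right)
    show "\<forall>t\<in>{-int n..int n} - {-int e..int e}. (if k * nat \<bar>t\<bar> ^ 2 = e then s ^ nat \<bar>t\<bar> else 0) = 0"
    proof
      fix t assume t: "t \<in> {-int n..int n} - {-int e..int e}"
      hence "e < nat \<bar>t\<bar>" by auto
      also have "nat \<bar>t\<bar> \<le> nat \<bar>t\<bar> ^ 2" by (rule nat_le_sq)
      also have "\<dots> \<le> k * nat \<bar>t\<bar> ^ 2" using k by simp
      finally show "(if k * nat \<bar>t\<bar> ^ 2 = e then s ^ nat \<bar>t\<bar> else 0) = 0" by simp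
    qed
  qed (use en in auto)
  finally show "Tr s k n $ e = theta s k $ e" by (simp add: theta_nth)
qed

lemma tr_prod:
  "Tr s k n * Tr s' k' n = (\<Sum>x\<in>{-int n..int n} \<times> {-int n..int n}.
      fps_const (s ^ nat \<bar>fst x\<bar> * s' ^ nat \<bar>snd x\<bar>) * fps_X ^ (k * nat \<bar>fst x\<bar> ^ 2 + k' * nat \<bar>snd x\<bar> ^ 2))"
  unfolding Tr_def sum_product sum.cartesian_product
  by (rule sum.cong) (auto simp: power_add mult_ac simp flip: fps_const_mult)

lemma pair_identity:
  fixes e :: nat
  defines "B \<equiv> {-int e..int e} \<times> {-int e..int e}"
  shows "(\<Sum>x\<in>B. if nat \<bar>fst x\<bar> ^ 2 + nat \<bar>snd x\<bar> ^ 2 = e then (-1::rat) ^ nat \<bar>snd x\<bar> else 0) =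
         (\<Sum>x\<in>B. if 2 * nat \<bar>fst x\<bar> ^ 2 + 2 * nat \<bar>snd x\<bar> ^ 2 = e then (-1) ^ nat \<bar>fst x\<bar> * (-1) ^ nat \<bar>snd x\<bar> else 0)"
proof -
  have fin: "finite B" by (simp add: B_def)
  have c1: "(nat \<bar>a\<bar> ^ 2 + nat \<bar>b\<bar> ^ 2 = e) \<longleftrightarrow> a^2 + b^2 = int e" for a b :: int
  proof -
    have "int (nat \<bar>a\<bar> ^ 2 + nat \<bar>b\<bar> ^ 2) = a^2 + b^2" by simp
    thus ?thesis by linarith
  qed
  have c2: "(2 * nat \<bar>a\<bar> ^ 2 + 2 * nat \<bar>b\<bar> ^ 2 = e) \<longleftrightarrow> 2*a^2 + 2*b^2 = int e" for a b :: int
  proof -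
    have "int (2 * nat \<bar>a\<bar> ^ 2 + 2 * nat \<bar>b\<bar> ^ 2) = 2*a^2 + 2*b^2" by simp
    thus ?thesis by linarith
  qed
  define SL where "SL = {x\<in>B. fst x ^ 2 + snd x ^ 2 = int e}"
  define SR where "SR = {x\<in>B. 2 * fst x ^ 2 + 2 * snd x ^ 2 = int e}"
  define SLe where "SLe = {x\<in>SL. even (fst x + snd x)}"
  define SLo where "SLo = {x\<in>SL. odd (fst x + snd x)}"
  have L: "(\<Sum>x\<in>B. if nat \<bar>fst x\<bar> ^ 2 + nat \<bar>snd x\<bar> ^ 2 = e then (-1::rat) ^ nat \<bar>snd x\<bar> else 0) =
      (\<Sum>x\<in>SL. (-1::rat) ^ nat \<bar>snd x\<bar>)"
    unfolding SL_def c1 using fin by (simp add: sum.inter_filter)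
  have R: "(\<Sum>x\<in>B. if 2 * nat \<bar>fst x\<bar> ^ 2 + 2 * nat \<bar>snd x\<bar> ^ 2 = e then (-1::rat) ^ nat \<bar>fst x\<bar> * (-1) ^ nat \<bar>snd x\<bar> else 0) =
      (\<Sum>x\<in>SR. (-1::rat) ^ nat \<bar>fst x\<bar> * (-1) ^ nat \<bar>snd x\<bar>)"
    unfolding SR_def c2 using fin by (simp add: sum.inter_filter)
  have split: "(\<Sum>x\<in>SL. (-1::rat) ^ nat \<bar>snd x\<bar>) = (\<Sum>x\<in>SLe. (-1::rat) ^ nat \<bar>snd x\<bar>) + (\<Sum>x\<in>SLo. (-1::rat) ^ nat \<bar>snd x\<bar>)"
  proof -
    have "SL = SLe \<union> SLo" "SLe \<inter> SLo = {}" unfolding SLe_def SLo_def by auto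
    moreover have "finite SLe" "finite SLo" using fin unfolding SLe_def SLo_def SL_def by auto
    ultimately show ?thesis by (simp add: sum.union_disjoint)
  qed
  have odd0: "(\<Sum>x\<in>SLo. (-1::rat) ^ nat \<bar>snd x\<bar>) = 0"
  proof -
    have "(\<Sum>x\<in>SLo. (-1::rat) ^ nat \<bar>snd x\<bar>) = (\<Sum>x\<in>SLo. (-1::rat) ^ nat \<bar>fst x\<bar>)"
      by (rule sum.reindex_bij_witness[where i="\<lambda>(a,b). (b,a)" and j="\<lambda>(a,b). (b,a)"])
         (auto simp: SLo_def SL_def B_def add_ac)
    also have "\<dots> = (\<Sum>x\<in>SLo. uminus ((-1::rat) ^ nat \<bar>snd x\<bar>))"
    proof (rule sum.cong)
      fix x assume "x \<in> SLo"
      hence o: "odd (fst x + snd x)" by (simp add: SLo_def)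
      have "odd (nat \<bar>fst x\<bar> + nat \<bar>snd x\<bar>)"
      proof -
        have "int (nat \<bar>fst x\<bar> + nat \<bar>snd x\<bar>) = \<bar>fst x\<bar> + \<bar>snd x\<bar>" by simp
        moreover have "odd (\<bar>fst x\<bar> + \<bar>snd x\<bar>)" using o by (auto simp: abs_if)
        ultimately show ?thesis by (metis even_of_nat)
      qed
      thus "(-1::rat) ^ nat \<bar>fst x\<bar> = uminus ((-1::rat) ^ nat \<bar>snd x\<bar>)"
        by (auto simp: minus_one_power_iff)
    qed simp
    also have "\<dots> = - (\<Sum>x\<in>SLo. (-1::rat) ^ nat \<bar>snd x\<bar>)" by (simp add: sum_negf)
    finally show ?thesis by simp
  qed
  have even_part: "(\<Sum>x\<in>SR. (-1::rat) ^ nat \<bar>fst x\<bar> * (-1) ^ nat \<bar>snd x\<bar>) = (\<Sum>x\<in>SLe. (-1::rat) ^ nat \<bar>snd x\<bar>)"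
  proof (rule sum.reindex_bij_witness[where i="\<lambda>(a,b). ((a+b) div 2, (a-b) div 2)" and j="\<lambda>(c,d). (c+d, c-d)"])
    fix x assume "x \<in> SR"
    then obtain c d where x: "x = (c,d)" and cd: "2*c^2 + 2*d^2 = int e" by (cases x) (auto simp: SR_def)
    show "(case (case x of (c, d) \<Rightarrow> (c + d, c - d)) of (a, b) \<Rightarrow> ((a + b) div 2, (a - b) div 2)) = x"
      using x by simp
    have sq: "(c+d)^2 + (c-d)^2 = int e" using cd by (simp add: power2_eq_square algebra_simps)
    have "\<bar>c+d\<bar> \<le> int e" using int_abs_le_sq[of "c+d"] sq by (smt (verit) zero_le_power2)
    moreover have "\<bar>c-d\<bar> \<le> int e" using int_abs_le_sq[of "c-d"] sq by (smt (verit) zero_le_power2)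
    ultimately show "(case x of (c, d) \<Rightarrow> (c + d, c - d)) \<in> SLe"
      using x sq by (auto simp: SLe_def SL_def B_def)
    have "odd (nat \<bar>c - d\<bar> + nat \<bar>c\<bar> + nat \<bar>d\<bar>) \<Longrightarrow> False"
    proof -
      assume a: "odd (nat \<bar>c - d\<bar> + nat \<bar>c\<bar> + nat \<bar>d\<bar>)"
      have "int (nat \<bar>c - d\<bar> + nat \<bar>c\<bar> + nat \<bar>d\<bar>) = \<bar>c - d\<bar> + \<bar>c\<bar> + \<bar>d\<bar>" by simp
      hence "odd (\<bar>c - d\<bar> + \<bar>c\<bar> + \<bar>d\<bar>)" using a by (metis even_of_nat)
      thus False by (auto simp: abs_if) presburger+
    qed
    hence "(-1::rat) ^ nat \<bar>c - d\<bar> = (-1) ^ (nat \<bar>c\<bar> + nat \<bar>d\<bar>)"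
      by (intro neg1_pow_eq) (auto simp: add_ac)
    thus "(-1::rat) ^ nat \<bar>snd (case x of (c, d) \<Rightarrow> (c + d, c - d))\<bar> = (-1) ^ nat \<bar>fst x\<bar> * (-1) ^ nat \<bar>snd x\<bar>"
      using x by (simp add: power_add)
  next
    fix y assume "y \<in> SLe"
    then obtain a b where y: "y = (a,b)" and ab: "a^2 + b^2 = int e" "even (a+b)" "\<bar>a\<bar> \<le> int e" "\<bar>b\<bar> \<le> int e"
      by (cases y) (auto simp: SLe_def SL_def B_def)
    have ev: "even (a - b)" using ab(2) by presburger
    define c where "c = (a+b) div 2"
    define d where "d = (a-b) div 2"
    have cd: "a = c + d" "b = c - d" using ab(2) ev unfolding c_def d_def by presburger+
    have iy: "(case y of (a, b) \<Rightarrow> ((a + b) div 2, (a - b) div 2)) = (c,d)" using y c_def d_def by simp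
    show "(case (case y of (a, b) \<Rightarrow> ((a + b) div 2, (a - b) div 2)) of (c, d) \<Rightarrow> (c + d, c - d)) = y"
      unfolding iy using y cd by simp
    have sq: "2*c^2 + 2*d^2 = int e" using ab(1) cd by (simp add: power2_eq_square algebra_simps)
    have "\<bar>c\<bar> \<le> int e" using int_abs_le_sq[of c] sq by (smt (verit) zero_le_power2)
    moreover have "\<bar>d\<bar> \<le> int e" using int_abs_le_sq[of d] sq by (smt (verit) zero_le_power2)
    ultimately show "(case y of (a, b) \<Rightarrow> ((a + b) div 2, (a - b) div 2)) \<in> SR"
      unfolding iy using sq by (auto simp: SR_def B_def)
  qed
  show ?thesis unfolding L R split odd0 even_part[symmetric] by simp
qed

theorem theta_prod: "theta 1 1 * theta (-1) 1 = theta (-1) 2 ^ 2"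
proof (rule xc_all_eq)
  fix D
  show "xc D (theta 1 1 * theta (-1) 1) (theta (-1) 2 ^ 2)"
    unfolding xc_def
  proof (intro allI impI)
    fix e assume "e < D"
    have 1: "xc (Suc e) (Tr 1 1 e * Tr (-1) 1 e) (theta 1 1 * theta (-1) 1)"
      by (intro xc_mult tr_theta) simp_all
    have 2: "xc (Suc e) (Tr (-1) 2 e * Tr (-1) 2 e) (theta (-1) 2 ^ 2)"
      unfolding power2_eq_square by (intro xc_mult tr_theta) simp_all
    have "(Tr 1 1 e * Tr (-1) 1 e) $ e = (Tr (-1) 2 e * Tr (-1) 2 e) $ e"
    proof -
      have "(Tr 1 1 e * Tr (-1) 1 e) $ e = (\<Sum>x\<in>{-int e..int e} \<times> {-int e..int e}. if nat \<bar>fst x\<bar> ^ 2 + nat \<bar>snd x\<bar> ^ 2 = e then (-1::rat) ^ nat \<bar>snd x\<bar> else 0)"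
        unfolding tr_prod mono_sum_nth by (intro sum.cong) auto
      also have "\<dots> = (\<Sum>x\<in>{-int e..int e} \<times> {-int e..int e}. if 2 * nat \<bar>fst x\<bar> ^ 2 + 2 * nat \<bar>snd x\<bar> ^ 2 = e then (-1) ^ nat \<bar>fst x\<bar> * (-1) ^ nat \<bar>snd x\<bar> else 0)"
        by (rule pair_identity)
      also have "\<dots> = (Tr (-1) 2 e * Tr (-1) 2 e) $ e"
        unfolding tr_prod mono_sum_nth by (intro sum.cong) auto
      finally show ?thesis .
    qed
    thus "(theta 1 1 * theta (-1) 1) $ e = (theta (-1) 2 ^ 2) $ e"
      using 1 2 by (simp add: xc_def)
  qed
qed





lemma theta0[simp]: "theta s k $ 0 = 1" by (simp add: theta_nth)

lemma gf_formula:
  assumes c: "c \<ge> 2"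
  shows "overcubic_gf c = theta 1 1 * inverse (theta (-1) 2) ^ (c+1)"
proof -
  define f1 where "f1 = eta_fps 1"
  define f2 where "f2 = eta_fps 2"
  define f4 where "f4 = eta_fps 4"
  define Psi where "Psi = theta (-1) 1"
  define R where "R = theta (-1) 2"
  define Phi where "Phi = theta 1 1"
  define E where "E = overcubic_gf c"
  have g1: "f1^2 = f2 * Psi" using gauss[of 1] by (simp add: f1_def f2_def Psi_def)
  have g2: "f2^2 = f4 * R" using gauss[of 2] by (simp add: f2_def f4_def R_def)
  have tp: "Phi * Psi = R^2" using theta_prod by (simp add: Phi_def Psi_def R_def)
  have E_def': "E = f4^(c-1) * inverse (f1^2) * inverse (f2^(2*c-3))"
    using c by (simp add: E_def overcubic_gf_def f1_def f2_def f4_def)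
  have i1: "inverse (f1^2) * f1^2 = 1" by (rule inverse_mult_eq_1) (simp add: f1_def)
  have i2: "inverse (f2^(2*c-3)) * f2^(2*c-3) = 1" by (rule inverse_mult_eq_1) (simp add: f2_def)
  have "E * (f1^2 * f2^(2*c-3)) = f4^(c-1)"
    unfolding E_def' using i1 i2 by (simp add: mult_ac)
  moreover have "f1^2 * f2^(2*c-3) = Psi * f4^(c-1) * R^(c-1)"
  proof -
    have "f1^2 * f2^(2*c-3) = Psi * f2^(Suc (2*c-3))" using g1 by (simp add: mult_ac)
    also have "Suc (2*c-3) = 2*(c-1)" using c by simp
    also have "f2^(2*(c-1)) = (f4 * R)^(c-1)" by (simp add: power_mult g2)
    finally show ?thesis by (simp add: power_mult_distrib mult_ac)
  qed
  ultimately have eq: "f4^(c-1) * (E * Psi * R^(c-1)) = f4^(c-1) * 1" by (simp add: mult_ac)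
  have nz: "f4^(c-1) \<noteq> 0"
  proof
    assume "f4^(c-1) = 0"
    hence "(f4^(c-1)) $ 0 = 0" by simp
    thus False by (simp add: f4_def)
  qed
  have e1: "E * Psi * R^(c-1) = 1" using mult_left_cancel[OF nz] eq by blast
  have "E * R^(c+1) = Phi"
  proof -
    have "c + 1 = (c - 1) + 2" using c by simp
    hence "R^(c+1) = R^(c-1) * R^2" by (simp only: power_add)
    hence "E * R^(c+1) = E * R^(c-1) * (Phi * Psi)" using tp by (simp only: mult.assoc)
    also have "\<dots> = (E * Psi * R^(c-1)) * Phi" by (simp only: mult_ac)
    finally have "E * R^(c+1) = (E * Psi * R^(c-1)) * Phi" .
    thus ?thesis unfolding e1 by simp
  qed
  moreover have "inverse R * R = 1" by (rule inverse_mult_eq_1) (simp add: R_def)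
  hence i3: "R^(c+1) * (inverse R)^(c+1) = 1" by (simp only: power_mult_distrib[symmetric] mult.commute power_one)
  ultimately have "E = Phi * (inverse R)^(c+1)"
  proof -
    assume h: "E * R^(c+1) = Phi"
    have "E = E * (R^(c+1) * (inverse R)^(c+1))" unfolding i3 by simp
    also have "\<dots> = (E * R^(c+1)) * (inverse R)^(c+1)" by (simp only: mult.assoc)
    finally show ?thesis unfolding h .
  qed
  thus ?thesis by (simp add: E_def Phi_def R_def)
qed





definition Zs :: "rat fps \<Rightarrow> bool" where "Zs F \<longleftrightarrow> (\<forall>n. F $ n \<in> \<int>)"
definition ev :: "rat fps \<Rightarrow> bool" where "ev F \<longleftrightarrow> (\<forall>n. odd n \<longrightarrow> F $ n = 0)"
definition dv :: "nat \<Rightarrow> rat fps \<Rightarrow> bool" where "dv j F \<longleftrightarrow> (\<exists>G. Zs G \<and> F = (2::rat fps)^j * G)"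
definition sup8 :: "rat fps \<Rightarrow> nat set \<Rightarrow> bool" where "sup8 F T \<longleftrightarrow> (\<forall>e. F $ e \<noteq> 0 \<longrightarrow> e mod 8 \<in> T)"

lemma Zs_add[intro]: "Zs F \<Longrightarrow> Zs G \<Longrightarrow> Zs (F + G)" by (auto simp: Zs_def)
lemma Zs_diff[intro]: "Zs F \<Longrightarrow> Zs G \<Longrightarrow> Zs (F - G)" by (auto simp: Zs_def)
lemma Zs_uminus[intro]: "Zs F \<Longrightarrow> Zs (- F)" by (auto simp: Zs_def)
lemma Zs_mult[intro]: "Zs F \<Longrightarrow> Zs G \<Longrightarrow> Zs (F * G)"
  unfolding Zs_def fps_mult_nth by (auto intro!: Ints_sum Ints_mult)
lemma Zs_1[intro]: "Zs 1" by (auto simp: Zs_def)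
lemma Zs_0[intro]: "Zs 0" by (auto simp: Zs_def)
lemma Zs_const[intro]: "c \<in> \<int> \<Longrightarrow> Zs (fps_const c)" by (auto simp: Zs_def)
lemma Zs_numeral[intro]: "Zs (numeral n)" by (simp add: fps_numeral_fps_const Zs_const)
lemma Zs_power[intro]: "Zs F \<Longrightarrow> Zs (F ^ n)" by (induction n) auto

lemma ev_add[intro]: "ev F \<Longrightarrow> ev G \<Longrightarrow> ev (F + G)" by (auto simp: ev_def)
lemma ev_diff[intro]: "ev F \<Longrightarrow> ev G \<Longrightarrow> ev (F - G)" by (auto simp: ev_def)
lemma ev_uminus[intro]: "ev F \<Longrightarrow> ev (- F)" by (auto simp: ev_def)
lemma ev_1[intro]: "ev 1" by (auto simp: ev_def)
lemma ev_const[intro]: "ev (fps_const c)" by (auto simp: ev_def)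
lemma ev_numeral[intro]: "ev (numeral n)" by (simp add: fps_numeral_fps_const ev_const)
lemma ev_0[intro]: "ev 0" by (simp add: ev_def)
lemma dv_zero_tmp: True ..
lemma ev_mult[intro]: assumes "ev F" "ev G" shows "ev (F * G)"
  unfolding ev_def
proof (intro allI impI)
  fix n :: nat assume n: "odd n"
  show "(F * G) $ n = 0" unfolding fps_mult_nth
  proof (rule sum.neutral, intro ballI)
    fix i assume "i \<in> {0..n}"
    show "F $ i * G $ (n - i) = 0"
    proof (cases "odd i")
      case True thus ?thesis using assms by (auto simp: ev_def)
    next
      case False
      hence "odd (n - i)" using n \<open>i \<in> {0..n}\<close> by auto
      thus ?thesis using assms by (auto simp: ev_def)
    qed
  qed
qed
lemma ev_power[intro]: "ev F \<Longrightarrow> ev (F ^ n)" by (induction n) auto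

lemma inv_coeff:
  fixes F G :: "rat fps"
  assumes "F * G = 1" "F $ 0 = 1" "n > 0"
  shows "G $ n = - (\<Sum>i\<in>{1..n}. F $ i * G $ (n - i))"
proof -
  have "0 = (F * G) $ n" using assms by simp
  also have "\<dots> = F $ 0 * G $ n + (\<Sum>i\<in>{1..n}. F $ i * G $ (n - i))"
    unfolding fps_mult_nth by (subst sum.atLeast_Suc_atMost) auto
  finally show ?thesis using assms by (simp add: eq_neg_iff_add_eq_0 add.commute)
qed

lemma Zs_inv:
  assumes "Zs F" "F $ 0 = 1"
  shows "Zs (inverse F)"
proof -
  define G where "G = inverse F"
  have FG: "F * G = 1" unfolding G_def by (rule inverse_mult_eq_1') (simp add: assms)
  have "G $ n \<in> \<int>" for n
  proof (induction n rule: less_induct)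
    case (less n)
    show ?case
    proof (cases "n = 0")
      case True thus ?thesis using assms by (simp add: G_def)
    next
      case False
      hence "G $ n = - (\<Sum>i\<in>{1..n}. F $ i * G $ (n - i))" using inv_coeff[OF FG assms(2)] by simp
      moreover have "(\<Sum>i\<in>{1..n}. F $ i * G $ (n - i)) \<in> \<int>"
        using assms(1) less by (auto simp: Zs_def intro!: Ints_sum Ints_mult)
      ultimately show ?thesis by simp
    qed
  qed
  thus ?thesis by (simp add: Zs_def G_def)
qed

lemma ev_inv:
  assumes "ev F" "F $ 0 = 1"
  shows "ev (inverse F)"
proof -
  define G where "G = inverse F"
  have FG: "F * G = 1" unfolding G_def by (rule inverse_mult_eq_1') (simp add: assms)
  have "odd n \<longrightarrow> G $ n = 0" for n
  proof (induction n rule: less_induct)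
    case (less n)
    show ?case
    proof
      assume n: "odd n"
      hence "n > 0" by presburger
      hence "G $ n = - (\<Sum>i\<in>{1..n}. F $ i * G $ (n - i))" using inv_coeff[OF FG assms(2)] by simp
      moreover have "(\<Sum>i\<in>{1..n}. F $ i * G $ (n - i)) = 0"
      proof (rule sum.neutral, intro ballI)
        fix i assume i: "i \<in> {1..n}"
        show "F $ i * G $ (n - i) = 0"
        proof (cases "odd i")
          case True thus ?thesis using assms(1) by (simp add: ev_def)
        next
          case False
          hence "odd (n - i)" "n - i < n" using n i by auto
          thus ?thesis using less by simp
        qed
      qed
      ultimately show "G $ n = 0" by simp
    qed
  qed
  thus ?thesis by (simp add: ev_def G_def)
qed

lemma dv_add[intro]: assumes "dv j F" "dv j G" shows "dv j (F + G)"
proof -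
  obtain F' G' where "Zs F'" "F = (2::rat fps)^j * F'" "Zs G'" "G = (2::rat fps)^j * G'"
    using assms unfolding dv_def by blast
  thus ?thesis unfolding dv_def by (intro exI[of _ "F' + G'"]) (auto simp: distrib_left)
qed
lemma dv_uminus[intro]: assumes "dv j F" shows "dv j (- F)"
proof -
  obtain F' where "Zs F'" "F = (2::rat fps)^j * F'" using assms unfolding dv_def by blast
  thus ?thesis unfolding dv_def by (intro exI[of _ "- F'"]) auto
qed
lemma dv_diff[intro]: "dv j F \<Longrightarrow> dv j G \<Longrightarrow> dv j (F - G)"
  using dv_add[of j F "- G"] dv_uminus[of j G] by simp
lemma dv_multL[intro]: assumes "Zs H" "dv j F" shows "dv j (H * F)"
proof -
  obtain F' where "Zs F'" "F = (2::rat fps)^j * F'" using assms unfolding dv_def by blast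
  thus ?thesis unfolding dv_def using assms(1) by (intro exI[of _ "H * F'"]) (auto simp: mult.left_commute)
qed
lemma dv_multR[intro]: "dv j F \<Longrightarrow> Zs H \<Longrightarrow> dv j (F * H)"
  using dv_multL[of H j F] by (simp add: mult.commute)
lemma dv_scale[intro]: "Zs F \<Longrightarrow> dv j ((2::rat fps)^j * F)"
  unfolding dv_def by auto
lemma dv_Zs: "dv j F \<Longrightarrow> Zs F"
  unfolding dv_def by (auto intro!: Zs_mult)
lemma two_pow_fps: "(2::rat fps)^j = fps_const (2^j)"
  by (simp add: fps_numeral_fps_const)
lemma two_pow_nth[simp]: "((2::rat fps)^j * F) $ n = 2^j * F $ n"
  by (simp add: two_pow_fps)
lemma Zs_two_pow[intro]: "Zs ((2::rat fps)^j)"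
  unfolding two_pow_fps by (rule Zs_const) simp
lemma dv_nth: assumes "dv j F" shows "\<exists>m::int. F $ n = 2^j * of_int m"
proof -
  obtain F' where "Zs F'" "F = (2::rat fps)^j * F'" using assms unfolding dv_def by blast
  moreover from this obtain m where "F' $ n = of_int m" unfolding Zs_def by (meson Ints_cases)
  ultimately show ?thesis by auto
qed

lemma sup8_mult:
  assumes "sup8 F T1" "sup8 G T2" "\<And>a b. a \<in> T1 \<Longrightarrow> b \<in> T2 \<Longrightarrow> (a + b) mod 8 \<in> T"
  shows "sup8 (F * G) T"
  unfolding sup8_def
proof (intro allI impI)
  fix e assume "(F * G) $ e \<noteq> 0"
  then obtain i where i: "i \<in> {0..e}" "F $ i * G $ (e - i) \<noteq> 0"
    unfolding fps_mult_nth by (meson sum.neutral)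
  hence "i mod 8 \<in> T1" "(e - i) mod 8 \<in> T2" using assms(1,2) by (auto simp: sup8_def)
  hence "(i mod 8 + (e - i) mod 8) mod 8 \<in> T" by (rule assms(3))
  moreover have "(i mod 8 + (e - i) mod 8) mod 8 = e mod 8"
    using i(1) by (simp add: mod_add_eq)
  ultimately show "e mod 8 \<in> T" by simp
qed
lemma sup8_add: "sup8 F T \<Longrightarrow> sup8 G T \<Longrightarrow> sup8 (F + G) T"
  unfolding sup8_def by force
lemma sup8_ev: "ev F \<Longrightarrow> sup8 F {0,2,4,6}"
  unfolding sup8_def ev_def
proof (intro allI impI)
  fix e assume "\<forall>n. odd n \<longrightarrow> F $ n = 0" "F $ e \<noteq> 0"
  hence "even e" by auto
  then obtain u where u: "e = 2 * u" by blast
  have "e mod 8 = 2 * (u mod 4)" unfolding u using mod_mult_mult1[of 2 u 4] by simp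
  moreover have "u mod 4 = 0 \<or> u mod 4 = 1 \<or> u mod 4 = 2 \<or> u mod 4 = 3" by presburger
  ultimately show "e mod 8 \<in> {0,2,4,6}" by auto
qed





lemma sym_sum:
  fixes f :: "nat \<Rightarrow> rat"
  assumes "f 0 = 0"
  shows "(\<Sum>t\<in>{-int e..int e}. f (nat \<bar>t\<bar>)) = 2 * (\<Sum>m\<in>{1..e}. f m)"
proof (induction e)
  case 0 thus ?case using assms by simp
next
  case (Suc e)
  have U: "{-int (Suc e)..int (Suc e)} = {-int e..int e} \<union> {-int (Suc e), int (Suc e)}" by auto
  have "(\<Sum>t\<in>{-int (Suc e)..int (Suc e)}. f (nat \<bar>t\<bar>)) =
        (\<Sum>t\<in>{-int e..int e}. f (nat \<bar>t\<bar>)) + (\<Sum>t\<in>{-int (Suc e), int (Suc e)}. f (nat \<bar>t\<bar>))"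
    unfolding U by (rule sum.union_disjoint) auto
  also have "(\<Sum>t\<in>{-int (Suc e), int (Suc e)}. f (nat \<bar>t\<bar>)) = 2 * f (Suc e)"
    by (simp add: sum.insert del: of_nat_Suc)
  finally show ?case using Suc by (simp add: sum.cl_ivl_Suc algebra_simps)
qed

definition half :: "rat \<Rightarrow> nat \<Rightarrow> rat fps" where
  "half s k = Abs_fps (\<lambda>e. if e = 0 then 0 else \<Sum>m\<in>{1..e}. if k * m ^ 2 = e then s ^ m else 0)"

lemma two_nth[simp]: "((2::rat fps) * F) $ e = 2 * F $ e"
  by (simp add: fps_numeral_fps_const)

lemma theta_half: "theta s k = 1 + 2 * half s k"
proof (rule fps_ext)
  fix e
  show "theta s k $ e = (1 + 2 * half s k) $ e"
  proof (cases "e = 0")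
    case True thus ?thesis by (simp add: half_def)
  next
    case False
    have "theta s k $ e = (\<Sum>t\<in>{-int e..int e}. (\<lambda>m. if k * m ^ 2 = e then s ^ m else 0) (nat \<bar>t\<bar>))"
      by (simp add: theta_nth)
    also have "\<dots> = 2 * (\<Sum>m\<in>{1..e}. if k * m ^ 2 = e then s ^ m else 0)"
      by (rule sym_sum) (use False in simp)
    finally show ?thesis using False by (simp add: half_def fps_numeral_fps_const)
  qed
qed

lemma Zs_half: "s \<in> \<int> \<Longrightarrow> Zs (half s k)"
  unfolding Zs_def half_def by (auto intro!: Ints_sum Ints_power)

lemma half_supp: assumes "half s k $ e \<noteq> 0" shows "\<exists>m. e = k * m ^ 2"
proof -
  have "(\<Sum>m\<in>{1..e}. if k * m ^ 2 = e then s ^ m else 0) \<noteq> 0"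
    using assms by (auto simp: half_def split: if_splits)
  hence "\<exists>m\<in>{1..e}. (if k * m ^ 2 = e then s ^ m else 0) \<noteq> 0"
  proof (rule contrapos_np)
    assume "\<not> (\<exists>m\<in>{1..e}. (if k * m ^ 2 = e then s ^ m else 0) \<noteq> 0)"
    hence "\<forall>m\<in>{1..e}. (if k * m ^ 2 = e then s ^ m else 0) = 0" by blast
    thus "(\<Sum>m\<in>{1..e}. if k * m ^ 2 = e then s ^ m else 0) = 0" by (rule sum.neutral)
  qed
  then obtain m where "(if k * m ^ 2 = e then s ^ m else 0) \<noteq> 0" by blast
  thus ?thesis by (auto split: if_splits)
qed

lemma theta_supp: "theta s k $ e \<noteq> 0 \<Longrightarrow> \<exists>m. e = k * m ^ 2"
  unfolding theta_half by (cases "e = 0") (auto dest: half_supp)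

lemma sq_mod8: "(m::nat) ^ 2 mod 8 \<in> {0,1,4}"
proof -
  have "m ^ 2 mod 8 = (m mod 8) ^ 2 mod 8" by (simp add: power_mod)
  moreover have "m mod 8 < 8" by simp
  hence "m mod 8 \<in> {0,1,2,3,4,5,6,7}" by auto
  ultimately show ?thesis by auto
qed

lemma sq2_mod8: "(2 * (m::nat) ^ 2) mod 8 \<in> {0,2}"
proof -
  have "(2 * m ^ 2) mod 8 = 2 * ((m ^ 2) mod 4)" using mod_mult_mult1[of 2 "m^2" 4] by simp
  moreover have "m ^ 2 mod 4 = (m mod 4) ^ 2 mod 4" by (simp add: power_mod)
  moreover have "m mod 4 < 4" by simp
  hence "m mod 4 \<in> {0,1,2,3}" by auto
  ultimately show ?thesis by auto
qed

lemma ev_theta2: "ev (theta s 2)"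
  unfolding ev_def using theta_supp[of s 2] by fastforce
lemma ev_half2: "ev (half s 2)"
  unfolding ev_def using half_supp[of s 2] by fastforce
lemma sup8_theta1: "sup8 (theta s 1) {0,1,4}"
  unfolding sup8_def
proof (intro allI impI)
  fix e assume "theta s 1 $ e \<noteq> 0"
  then obtain m where "e = 1 * m ^ 2" using theta_supp by blast
  thus "e mod 8 \<in> {0,1,4}" using sq_mod8[of m] by simp
qed
lemma sup8_half1: "sup8 (half s 1) {0,1,4}"
  unfolding sup8_def
proof (intro allI impI)
  fix e assume "half s 1 $ e \<noteq> 0"
  then obtain m where "e = 1 * m ^ 2" using half_supp by blast
  thus "e mod 8 \<in> {0,1,4}" using sq_mod8[of m] by simp
qed
lemma sup8_theta2: "sup8 (theta s 2) {0,2}"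
  unfolding sup8_def
proof (intro allI impI)
  fix e assume "theta s 2 $ e \<noteq> 0"
  then obtain m where "e = 2 * m ^ 2" using theta_supp by blast
  thus "e mod 8 \<in> {0,2}" using sq2_mod8[of m] by simp
qed
lemma sup8_half2: "sup8 (half s 2) {0,2}"
  unfolding sup8_def
proof (intro allI impI)
  fix e assume "half s 2 $ e \<noteq> 0"
  then obtain m where "e = 2 * m ^ 2" using half_supp by blast
  thus "e mod 8 \<in> {0,2}" using sq2_mod8[of m] by simp
qed





lemma dv_zero[intro]: "dv j 0" unfolding dv_def by (auto intro!: exI[of _ 0])
lemma dv1_double: "Zs F \<Longrightarrow> dv 1 (2 * F)" using dv_scale[of F 1] by simp
lemma Zs_of_nat[intro]: "Zs (of_nat m)"
  by (simp add: fps_of_nat[symmetric] Zs_const)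

lemma pow_step:
  assumes X: "X = 1 + 2 * A" and A: "Zs A" "ev A"
  shows "\<exists>A'. X^m = 1 + 2 * A' \<and> Zs A' \<and> ev A' \<and> dv 1 (A' - of_nat m * A)"
proof (induction m)
  case 0 show ?case by (intro exI[of _ 0]) auto
next
  case (Suc m)
  then obtain A' where h: "X^m = 1 + 2 * A'" "Zs A'" "ev A'" "dv 1 (A' - of_nat m * A)" by blast
  define A'' where "A'' = A' + A + 2 * (A * A')"
  have "X^Suc m = X * (1 + 2 * A')" using h(1) by simp
  also have "\<dots> = 1 + 2 * A''"
    unfolding A''_def X by (simp add: algebra_simps)
  finally have 1: "X^Suc m = 1 + 2 * A''" .
  have "Zs A''" unfolding A''_def using h A by (intro Zs_add Zs_mult Zs_numeral) auto
  moreover have "ev A''" unfolding A''_def using h A by (intro ev_add ev_mult ev_numeral) auto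
  moreover have "dv 1 (A'' - of_nat (Suc m) * A)"
  proof -
    have eq: "A'' - of_nat (Suc m) * A = (A' - of_nat m * A) + 2 * (A * A')"
      unfolding A''_def by (simp add: algebra_simps)
    have "Zs (A * A')" using h A by auto
    thus ?thesis unfolding eq by (intro dv_add dv1_double h(4))
  qed
  ultimately show ?case using 1 by blast
qed

lemma odd_cong:
  assumes "odd m" "Zs A"
  shows "dv 1 (of_nat m * A - A)"
proof -
  obtain q where q: "m = 2 * q + 1" using assms(1) oddE by blast
  have eq: "of_nat m * A - A = 2 * (of_nat q * A)"
    unfolding q by (simp add: algebra_simps)
  have "Zs (of_nat q * A)" using assms(2) by auto
  thus ?thesis unfolding eq by (rule dv1_double)
qed

lemma step2:
  assumes X: "X = 1 + 2 * A" and A: "Zs A" "ev A" and m: "odd m"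
    and U: "U * X^m = 1" "Zs U" "ev U"
  shows "\<exists>W. U = 1 + 2 * W \<and> Zs W \<and> ev W \<and> dv 1 (W - A)"
proof -
  obtain A' where h: "X^m = 1 + 2 * A'" "Zs A'" "ev A'" "dv 1 (A' - of_nat m * A)"
    using pow_step[OF X A] by blast
  define W where "W = - (A' * U)"
  have UW: "U = 1 + 2 * W"
  proof -
    have "U + 2 * (A' * U) = 1" using U(1) unfolding h(1) by (simp add: algebra_simps)
    hence "U = 1 - 2 * (A' * U)" by (metis add_diff_cancel_right')
    thus ?thesis unfolding W_def by simp
  qed
  moreover have "Zs W" "ev W" unfolding W_def using h U by auto
  moreover have "dv 1 (W - A)"
  proof -
    have Weq: "W = - (A' * (1 + 2 * W))" using UW W_def by metis
    have eq: "W - A = - ((A' - of_nat m * A) + (of_nat m * A - A)) - 2 * (A' * W) - 2 * A"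
      using Weq by algebra
    have "Zs (A' * W)" using h \<open>Zs W\<close> by auto
    thus ?thesis unfolding eq using A(1) by (intro dv_add dv_diff dv_uminus dv1_double h(4) odd_cong[OF m A(1)])
  qed
  ultimately show ?thesis by blast
qed

lemma step3:
  assumes UW: "U = 1 + 2 * W" and W: "Zs W" "ev W"
  shows "\<exists>V. U^(2^Suc s) = 1 + 2^(s+2) * V \<and> Zs V \<and> ev V \<and> dv 1 (V - (W + W^2))"
proof (induction s)
  case 0
  have "U^(2^Suc 0) = 1 + 2^(0+2) * (W + W^2)"
    unfolding UW by (simp add: algebra_simps power2_eq_square)
  moreover have "Zs (W + W^2)" "ev (W + W^2)" using W by auto
  ultimately show ?case by (intro exI[of _ "W + W^2"]) auto
next
  case (Suc s)
  then obtain V where h: "U^(2^Suc s) = 1 + 2^(s+2) * V" "Zs V" "ev V" "dv 1 (V - (W + W^2))" by blast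
  define V' where "V' = V + 2^(s+1) * V^2"
  have "U^(2^Suc (Suc s)) = (U^(2^Suc s))^2" by (simp add: power_mult[symmetric] mult.commute)
  also have "\<dots> = 1 + 2^(Suc s+2) * V'"
  proof -
    have "(1 + (2::rat fps)^(s+2) * V)^2 = 1 + 2 * 2^(s+2) * V + (2^(s+2) * 2^(s+2)) * V^2"
      by (simp add: power2_eq_square algebra_simps)
    also have "(2::rat fps)^(s+2) * 2^(s+2) = 2^(Suc s+2) * 2^(s+1)"
      by (simp add: power_add[symmetric])
    also have "1 + 2 * 2^(s+2) * V + (2^(Suc s+2) * 2^(s+1)) * V^2 = 1 + 2^(Suc s+2) * V'"
      unfolding V'_def by (simp add: algebra_simps)
    finally show ?thesis unfolding h(1) .
  qed
  finally have 1: "U^(2^Suc (Suc s)) = 1 + 2^(Suc s+2) * V'" .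
  have "Zs V'" unfolding V'_def using h by (intro Zs_add Zs_mult Zs_power Zs_numeral) auto
  have "ev V'" unfolding V'_def using h by (intro ev_add ev_mult ev_power ev_numeral) auto
  moreover have "dv 1 (V' - (W + W^2))"
  proof -
    have eq: "V' - (W + W^2) = (V - (W + W^2)) + 2 * (2^s * V^2)"
      unfolding V'_def by (simp add: algebra_simps)
    have "Zs (2^s * V^2)" using h by auto
    thus ?thesis unfolding eq by (intro dv_add dv1_double h(4))
  qed
  ultimately show ?case using 1 \<open>Zs V'\<close> by blast
qed





lemma sup8_mono: "sup8 F T \<Longrightarrow> T \<subseteq> T' \<Longrightarrow> sup8 F T'"
  unfolding sup8_def by blast

lemma key:
  assumes k: "k \<ge> 2" and m: "odd m'"
  shows "\<exists>V'. Zs V' \<and>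
     (\<forall>d. d mod 8 = 5 \<or> d mod 8 = 7 \<longrightarrow>
        (theta 1 1 * theta (-1) 2 * inverse (theta (-1) 2) ^ (2^(k-1) * m')) $ d = 2^(k+1) * V' $ d) \<and>
     (\<forall>d. d mod 8 = 7 \<longrightarrow> (\<exists>z::int. V' $ d = 2 * of_int z))"
proof -
  define R where "R = theta (-1) 2"
  define A where "A = half (-1) 2"
  define Phi where "Phi = theta 1 1"
  define B where "B = half 1 1"
  define S where "S = inverse R"
  have RA: "R = 1 + 2 * A" unfolding R_def A_def by (rule theta_half)
  have PB: "Phi = 1 + 2 * B" unfolding Phi_def B_def by (rule theta_half)
  have ZA: "Zs A" unfolding A_def by (rule Zs_half) simp
  have ZB: "Zs B" unfolding B_def by (rule Zs_half) simp
  have eA: "ev A" unfolding A_def by (rule ev_half2)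
  have ZR: "Zs R" unfolding RA using ZA by auto
  have eR: "ev R" unfolding R_def by (rule ev_theta2)
  have R0: "R $ 0 = 1" unfolding R_def by simp
  have ZS: "Zs S" unfolding S_def by (rule Zs_inv[OF ZR R0])
  have eS: "ev S" unfolding S_def by (rule ev_inv[OF eR R0])
  have RS: "R * S = 1" unfolding S_def by (rule inverse_mult_eq_1') (simp add: R0)
  define U where "U = S ^ m'"
  have U1: "U * R ^ m' = 1" unfolding U_def using RS by (simp add: power_mult_distrib[symmetric] mult.commute)
  have ZU: "Zs U" "ev U" unfolding U_def using ZS eS by auto
  obtain W where W: "U = 1 + 2 * W" "Zs W" "ev W" "dv 1 (W - A)"
    using step2[OF RA ZA eA m U1 ZU] by blast
  obtain V where V: "U^(2^Suc (k-2)) = 1 + 2^((k-2)+2) * V" "Zs V" "ev V" "dv 1 (V - (W + W^2))"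
    using step3[OF W(1-3)] by blast
  have k2: "Suc (k-2) = k - 1" "(k-2)+2 = k" using k by auto
  have SM: "S ^ (2^(k-1) * m') = 1 + 2^k * V"
    using V(1) unfolding k2 U_def by (simp add: power_mult[symmetric] mult.commute)
  define Z where "Z = B * R * V"
  have ZZ: "Zs Z" unfolding Z_def using ZB ZR V(2) by auto
  have Gexp: "Phi * R * S ^ (2^(k-1) * m') = Phi * R + 2^k * (R * V) + 2^(k+1) * Z"
    unfolding SM PB Z_def by (simp add: algebra_simps)
  have supPR: "sup8 (Phi * R) {0,1,2,3,4,6}"
    unfolding Phi_def R_def by (rule sup8_mult[OF sup8_theta1 sup8_theta2]) auto
  have evRV: "ev (R * V)" using eR V(3) by auto
  have c1: "(Phi * R * S ^ (2^(k-1) * m')) $ d = 2^(k+1) * Z $ d" if d: "d mod 8 = 5 \<or> d mod 8 = 7" for d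
  proof -
    have "(Phi * R) $ d = 0" using supPR d unfolding sup8_def by auto
    moreover have "odd d" using d by presburger
    hence "(R * V) $ d = 0" using evRV unfolding ev_def by auto
    ultimately show ?thesis unfolding Gexp fps_add_nth two_pow_nth by simp
  qed
  have c2: "\<exists>z::int. Z $ d = 2 * of_int z" if d: "d mod 8 = 7" for d
  proof -
    have eq: "Z - B * (A + A^2) = B * (2 * (A * V) + (V - (W + W^2)) + (W - A) + (W - A) * (W + A))"
      unfolding Z_def RA by (simp add: algebra_simps power2_eq_square)
    have "dv 1 (Z - B * (A + A^2))" unfolding eq using ZA ZB V W
      by (intro dv_multL dv_add dv_multR dv1_double Zs_mult Zs_add) auto
    from dv_nth[OF this, of d] obtain z :: int where z: "(Z - B * (A + A^2)) $ d = 2 ^ 1 * of_int z"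
      by blast
    have sA0: "sup8 A {0,2}" unfolding A_def by (rule sup8_half2)
    have sA: "sup8 A {0,2,4}" by (rule sup8_mono[OF sA0]) auto
    have sA2: "sup8 (A^2) {0,2,4}" unfolding power2_eq_square
      by (rule sup8_mult[OF sA0 sA0]) auto
    have "sup8 (B * (A + A^2)) {0,1,2,3,4,5,6}"
      unfolding B_def by (rule sup8_mult[OF sup8_half1 sup8_add[OF sA sA2]]) auto
    hence "(B * (A + A^2)) $ d = 0" using d unfolding sup8_def by auto
    thus ?thesis using z by auto
  qed
  show ?thesis
    using ZZ c1 c2 unfolding Phi_def R_def S_def by blast
qed

theorem theorem1p7:
  fixes n i k :: nat
  assumes "i \<ge> 1" and "k \<ge> 3"
  shows "(\<exists>m::int. abar (2^k * i - 2^(k-1) - 2) (8*n+5) = of_int (2^(k+1) * m)) \<and>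
         (\<exists>m::int. abar (2^k * i - 2^(k-1) - 2) (8*n+7) = of_int (2^(k+2) * m))"
proof -
  define P :: nat where "P = 2^(k-1)"
  define c where "c = 2^k * i - 2^(k-1) - 2"
  define m' where "m' = 2 * i - 1"
  have k2: "k = Suc (k - 1)" using assms by simp
  have Pk: "2^k = 2 * P" unfolding P_def by (subst k2) simp
  have P4: "4 \<le> P" unfolding P_def using power_increasing[of 2 "k-1" "2::nat"] assms by simp
  have om: "odd m'" unfolding m'_def using assms by presburger
  have big: "2 * P * i \<ge> 2 * P * 1" using assms by (intro mult_le_mono2) simp
  have c_eq: "c = 2 * P * i - P - 2" unfolding c_def Pk P_def by simp
  have pm: "P * m' = 2 * P * i - P" unfolding m'_def by (simp add: diff_mult_distrib2 algebra_simps)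
  have cP: "c + 2 = P * m'" using c_eq pm big P4 by linarith
  have c2: "c \<ge> 2"
  proof -
    have "m' \<ge> 1" using om by presburger
    hence "P \<le> P * m'" by simp
    thus ?thesis using cP P4 by linarith
  qed
  define R where "R = theta (-1) 2"
  define Phi where "Phi = theta 1 1"
  have R0: "R $ 0 = 1" unfolding R_def by simp
  have RS: "R * inverse R = 1" by (rule inverse_mult_eq_1') (simp add: R0)
  have gf: "overcubic_gf c = Phi * R * inverse R ^ (2^(k-1) * m')"
  proof -
    have "overcubic_gf c = Phi * inverse R ^ (c+1)" using gf_formula[OF c2] by (simp add: Phi_def R_def)
    also have "\<dots> = Phi * (R * inverse R) * inverse R ^ (c+1)" by (simp add: RS)
    also have "\<dots> = Phi * R * inverse R ^ (c + 2)" by (simp add: mult_ac)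
    also have "c + 2 = 2^(k-1) * m'" using cP by (simp add: P_def)
    finally show ?thesis .
  qed
  obtain V where V: "Zs V"
    "\<And>d. d mod 8 = 5 \<or> d mod 8 = 7 \<Longrightarrow> (Phi * R * inverse R ^ (2^(k-1) * m')) $ d = 2^(k+1) * V $ d"
    "\<And>d. d mod 8 = 7 \<Longrightarrow> (\<exists>z::int. V $ d = 2 * of_int z)"
    using key[of k m'] assms om unfolding Phi_def R_def by auto
  have ab: "abar (2^k * i - 2^(k-1) - 2) d = (Phi * R * inverse R ^ (2^(k-1) * m')) $ d" for d
    unfolding abar_def c_def[symmetric] gf ..
  have part1: "\<exists>m::int. abar (2^k * i - 2^(k-1) - 2) (8*n+5) = of_int (2^(k+1) * m)"
  proof -
    have "(8*n+5) mod 8 = 5" by simp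
    hence e: "abar (2^k * i - 2^(k-1) - 2) (8*n+5) = 2^(k+1) * V $ (8*n+5)" using V(2) ab by simp
    obtain z :: int where "V $ (8*n+5) = of_int z" using V(1) unfolding Zs_def by (meson Ints_cases)
    thus ?thesis using e by (intro exI[of _ z]) simp
  qed
  have part2: "\<exists>m::int. abar (2^k * i - 2^(k-1) - 2) (8*n+7) = of_int (2^(k+2) * m)"
  proof -
    have d7: "(8*n+7) mod 8 = 7" by simp
    hence e: "abar (2^k * i - 2^(k-1) - 2) (8*n+7) = 2^(k+1) * V $ (8*n+7)" using V(2) ab by simp
    obtain z :: int where "V $ (8*n+7) = 2 * of_int z" using V(3)[OF d7] by blast
    thus ?thesis using e by (intro exI[of _ z]) simp
  qed
  show ?thesis using part1 part2 by blast
qed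



end
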